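(* Let $P$ be a finite poset and $t\geq 2$, $n\geq 2$ integers. Suppose $\mathcal{F}\subseteq[t]^n$ is induced $P$-saturated and $i\in[n]$ is not separating for $\mathcal{F}$. Then $D_i(\mathcal{F})=\{D_i(f):f\in\mathcal{F}\}$ is an induced $P$-saturated family in $[t]^{n-1}$.
   Context: $[n]=\{1,\dots,n\}$; $[t]^n$ is the set of functions $f:[n]\to[t]$ ordered by $f\leq g$ iff $f(j)\leq g(j)$ for all $j$. An induced copy of $P$ in $\mathcal{F}\subseteq[t]^n$ is an injective map $\phi:P\to\mathcal{F}$ with $\phi(x)\leq\phi(y)$ iff $x\leq_P y$. $\mathcal{F}$ is induced $P$-saturated if it contains no induced copy of $P$ and for every $f\in[t]^n\setminus\mathcal{F}$, $\mathcal{F}\cup\{f\}$ contains an induced copy of $P$. For $f\in[t]^n$, $D_i(f)\in[t]^{n-1}$ is given by $D_i(f)(x)=f(x)$ for $x<i$ and $D_i(f)(x)=f(x+1)$ for $i\leq x\leq n-1$. Coordinate $i$ is separating for $\mathcal{F}$ if there exist distinct $f,f'\in\mathcal{F}$ with $D_i(f)\leq D_i(f')$ and $f(i)>f'(i)$. *)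

theory Defs
  imports Main
begin

text \<open>Elements of [t]^n are represented as functions nat => nat that take values
in {1..t} on {1..n} and are 0 outside {1..n} (canonical representatives).\<close>

definition grid :: "nat \<Rightarrow> nat \<Rightarrow> (nat \<Rightarrow> nat) set" where
  "grid t n = {f. (\<forall>j\<in>{1..n}. f j \<in> {1..t}) \<and> (\<forall>j. j \<notin> {1..n} \<longrightarrow> f j = 0)}"

definition gleq :: "nat \<Rightarrow> (nat \<Rightarrow> nat) \<Rightarrow> (nat \<Rightarrow> nat) \<Rightarrow> bool" where
  "gleq n f g = (\<forall>j\<in>{1..n}. f j \<le> g j)"

definition Del :: "nat \<Rightarrow> nat \<Rightarrow> (nat \<Rightarrow> nat) \<Rightarrow> (nat \<Rightarrow> nat)" where
  "Del n i f = (\<lambda>x. if x < i then f x else if i \<le> x \<and> x \<le> n - 1 then f (x + 1) else 0)"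

definition has_induced_copy :: "('a \<Rightarrow> 'a \<Rightarrow> bool) \<Rightarrow> nat \<Rightarrow> (nat \<Rightarrow> nat) set \<Rightarrow> bool" where
  "has_induced_copy leP n F =
     (\<exists>\<phi> :: 'a \<Rightarrow> (nat \<Rightarrow> nat). inj \<phi> \<and> range \<phi> \<subseteq> F \<and>
        (\<forall>x y. gleq n (\<phi> x) (\<phi> y) \<longleftrightarrow> leP x y))"

definition induced_saturated :: "('a \<Rightarrow> 'a \<Rightarrow> bool) \<Rightarrow> nat \<Rightarrow> nat \<Rightarrow> (nat \<Rightarrow> nat) set \<Rightarrow> bool" where
  "induced_saturated leP t n F =
     (F \<subseteq> grid t n \<and> \<not> has_induced_copy leP n F \<and>
      (\<forall>f \<in> grid t n - F. has_induced_copy leP n (insert f F)))"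

definition separating :: "nat \<Rightarrow> nat \<Rightarrow> (nat \<Rightarrow> nat) set \<Rightarrow> bool" where
  "separating n i F =
     (\<exists>f\<in>F. \<exists>f'\<in>F. f \<noteq> f' \<and> gleq (n - 1) (Del n i f) (Del n i f') \<and> f i > f' i)"

end

theory Submission
  imports Defs
begin

lemma gleq_trans: "gleq m a b \<Longrightarrow> gleq m b c \<Longrightarrow> gleq m a c"
  unfolding gleq_def using le_trans by blast

lemma grid_antisym:
  assumes "a \<in> grid t n" "b \<in> grid t n" "gleq n a b" "gleq n b a"
  shows "a = b"
proof
  fix j show "a j = b j"
  proof (cases "j \<in> {1..n}")
    case True then show ?thesis using assms(3,4) unfolding gleq_def by (meson antisym)
  next
    case False then show ?thesis using assms(1,2) unfolding grid_def by auto
  qed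
qed

lemma gleq_Del:
  assumes "i \<in> {1..n}"
  shows "gleq n a b \<longleftrightarrow> gleq (n - 1) (Del n i a) (Del n i b) \<and> a i \<le> b i"
proof
  assume h: "gleq n a b"
  have "gleq (n - 1) (Del n i a) (Del n i b)"
    unfolding gleq_def Del_def
  proof
    fix j assume j: "j \<in> {1..n-1}"
    show "(if j < i then a j else if i \<le> j \<and> j \<le> n - 1 then a (j + 1) else 0)
      \<le> (if j < i then b j else if i \<le> j \<and> j \<le> n - 1 then b (j + 1) else 0)"
      using h j unfolding gleq_def by auto
  qed
  then show "gleq (n - 1) (Del n i a) (Del n i b) \<and> a i \<le> b i"
    using h assms unfolding gleq_def by auto
next
  assume h: "gleq (n - 1) (Del n i a) (Del n i b) \<and> a i \<le> b i"
  show "gleq n a b" unfolding gleq_def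
  proof
    fix j assume j: "j \<in> {1..n}"
    consider "j < i" | "j = i" | "j > i" by linarith
    then show "a j \<le> b j"
    proof cases
      case 1
      then have "j \<in> {1..n-1}" using j assms by auto
      then show ?thesis using h 1 unfolding gleq_def Del_def by force
    next
      case 2 then show ?thesis using h by simp
    next
      case 3
      then have "j - 1 \<in> {1..n-1}" using j assms by auto
      then have "Del n i a (j - 1) \<le> Del n i b (j - 1)" using h unfolding gleq_def by blast
      moreover have "Del n i a (j - 1) = a j" "Del n i b (j - 1) = b j"
        using 3 j unfolding Del_def by auto
      ultimately show ?thesis by simp
    qed
  qed
qed

lemma transfer_copy:
  assumes inj: "inj_on D S"
    and ord: "\<And>a b. a \<in> S \<Longrightarrow> b \<in> S \<Longrightarrow> gleq n a b \<longleftrightarrow> gleq m (D a) (D b)"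
  shows "has_induced_copy leP n S \<longleftrightarrow> has_induced_copy leP m (D ` S)"
proof
  assume "has_induced_copy leP n S"
  then obtain \<phi> where p: "inj \<phi>" "range \<phi> \<subseteq> S" "\<forall>x y. gleq n (\<phi> x) (\<phi> y) \<longleftrightarrow> leP x y"
    unfolding has_induced_copy_def by blast
  have "inj (D \<circ> \<phi>)" using p inj by (meson comp_inj_on inj_on_subset)
  moreover have "range (D \<circ> \<phi>) \<subseteq> D ` S" using p by auto
  moreover have "\<forall>x y. gleq m ((D \<circ> \<phi>) x) ((D \<circ> \<phi>) y) \<longleftrightarrow> leP x y"
  proof (intro allI)
    fix x y
    have "\<phi> x \<in> S" "\<phi> y \<in> S" using p(2) by auto
    then show "gleq m ((D \<circ> \<phi>) x) ((D \<circ> \<phi>) y) \<longleftrightarrow> leP x y" using p(3) ord by auto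
  qed
  ultimately show "has_induced_copy leP m (D ` S)"
    unfolding has_induced_copy_def by blast
next
  assume "has_induced_copy leP m (D ` S)"
  then obtain \<psi> where p: "inj \<psi>" "range \<psi> \<subseteq> D ` S" "\<forall>x y. gleq m (\<psi> x) (\<psi> y) \<longleftrightarrow> leP x y"
    unfolding has_induced_copy_def by blast
  define \<phi> where "\<phi> = inv_into S D \<circ> \<psi>"
  have r: "range \<phi> \<subseteq> S" unfolding \<phi>_def using p(2) inv_into_into[of _ D S] by (simp add: image_subset_iff)
  have e: "D (\<phi> x) = \<psi> x" for x unfolding \<phi>_def using p(2) f_inv_into_f[of _ D S] by (simp add: image_subset_iff)
  have "inj \<phi>" by (metis e injI p(1) injD)
  moreover have "\<forall>x y. gleq n (\<phi> x) (\<phi> y) \<longleftrightarrow> leP x y"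
  proof (intro allI)
    fix x y
    have "\<phi> x \<in> S" "\<phi> y \<in> S" using r by auto
    then show "gleq n (\<phi> x) (\<phi> y) \<longleftrightarrow> leP x y" using ord e p(3) by metis
  qed
  ultimately show "has_induced_copy leP n S"
    using r unfolding has_induced_copy_def by blast
qed

lemma Del_props:
  assumes i: "i \<in> {1..n}" and S: "S \<subseteq> grid t n"
    and ns: "\<And>a b. a \<in> S \<Longrightarrow> b \<in> S \<Longrightarrow> gleq (n - 1) (Del n i a) (Del n i b) \<Longrightarrow> a i \<le> b i"
  shows "inj_on (Del n i) S"
    and "\<And>a b. a \<in> S \<Longrightarrow> b \<in> S \<Longrightarrow> gleq n a b \<longleftrightarrow> gleq (n - 1) (Del n i a) (Del n i b)"
proof -
  show o: "\<And>a b. a \<in> S \<Longrightarrow> b \<in> S \<Longrightarrow> gleq n a b \<longleftrightarrow> gleq (n - 1) (Del n i a) (Del n i b)"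
    using gleq_Del[OF i] ns by blast
  show "inj_on (Del n i) S"
  proof (rule inj_onI)
    fix a b assume ab: "a \<in> S" "b \<in> S" "Del n i a = Del n i b"
    have r: "gleq (n - 1) (Del n i a) (Del n i a)" unfolding gleq_def by simp
    show "a = b" using grid_antisym[of a t n b] S ab o[of a b] o[of b a] r by auto
  qed
qed

lemma Del_grid:
  assumes "i \<in> {1..n}" "f \<in> grid t n"
  shows "Del n i f \<in> grid t (n - 1)"
  using assms unfolding grid_def Del_def by auto

theorem mainTheorem13:
  fixes F :: "(nat \<Rightarrow> nat) set" and t n i :: nat
    and P :: "'a :: {order, finite} itself"
  assumes "t \<ge> 2" and "n \<ge> 2" and "i \<in> {1..n}"
    and "induced_saturated ((\<le>) :: 'a \<Rightarrow> 'a \<Rightarrow> bool) t n F"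
    and "\<not> separating n i F"
  shows "induced_saturated ((\<le>) :: 'a \<Rightarrow> 'a \<Rightarrow> bool) t (n - 1) (Del n i ` F)"
proof -
  have Fg: "F \<subseteq> grid t n" and nc: "\<not> has_induced_copy ((\<le>) :: 'a \<Rightarrow> 'a \<Rightarrow> bool) n F"
    and sat: "\<forall>f \<in> grid t n - F. has_induced_copy ((\<le>) :: 'a \<Rightarrow> 'a \<Rightarrow> bool) n (insert f F)"
    using assms(4) unfolding induced_saturated_def by auto
  have ns: "\<And>a b. a \<in> F \<Longrightarrow> b \<in> F \<Longrightarrow> gleq (n - 1) (Del n i a) (Del n i b) \<Longrightarrow> a i \<le> b i"
    using assms(5) unfolding separating_def by (metis le_refl not_le)
  have DP1: "inj_on (Del n i) F" using Del_props(1)[of i n F t] assms(3) Fg ns by blast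
  have DP2: "\<And>a b. a \<in> F \<Longrightarrow> b \<in> F \<Longrightarrow> gleq n a b \<longleftrightarrow> gleq (n - 1) (Del n i a) (Del n i b)"
    using Del_props(2)[of i n F t] assms(3) Fg ns by blast
  note DP = DP1 DP2
  have A: "Del n i ` F \<subseteq> grid t (n - 1)" using Del_grid[OF assms(3)] Fg by auto
  have B: "\<not> has_induced_copy ((\<le>) :: 'a \<Rightarrow> 'a \<Rightarrow> bool) (n - 1) (Del n i ` F)"
    using transfer_copy[OF DP(1), of n "n - 1"] DP(2) nc by blast
  have C: "has_induced_copy ((\<le>) :: 'a \<Rightarrow> 'a \<Rightarrow> bool) (n - 1) (insert g (Del n i ` F))"
    if g: "g \<in> grid t (n - 1) - Del n i ` F" for g
  proof -
    define Bs where "Bs = {h i | h. h \<in> F \<and> gleq (n - 1) (Del n i h) g}"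
    have Bsub: "Bs \<subseteq> {1..t}" unfolding Bs_def using Fg assms(3) unfolding grid_def by blast
    define c where "c = Max (insert 1 Bs)"
    have fin: "finite (insert 1 Bs)" using Bsub finite_subset by blast
    have "insert 1 Bs \<subseteq> {1..t}" using Bsub assms(1) by auto
    moreover have "Max (insert 1 Bs) \<in> insert 1 Bs" using fin by (rule Max_in) simp
    ultimately have c1: "c \<in> {1..t}" unfolding c_def by blast
    have cB: "h i \<le> c" if "h \<in> F" "gleq (n - 1) (Del n i h) g" for h
      unfolding c_def using fin that Bs_def by (auto intro!: Max_ge)
    have cA: "c \<le> h i" if h: "h \<in> F" "gleq (n - 1) g (Del n i h)" for h
    proof -
      have "h i \<ge> 1" using h Fg assms(3) unfolding grid_def by auto
      moreover have "b \<le> h i" if "b \<in> Bs" for b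
      proof -
        obtain h' where "b = h' i" "h' \<in> F" "gleq (n - 1) (Del n i h') g"
          using \<open>b \<in> Bs\<close> Bs_def by auto
        then show ?thesis using ns[of h' h] h gleq_trans by blast
      qed
      ultimately show ?thesis unfolding c_def using fin by auto
    qed
    define f where "f = (\<lambda>x. if x < i then g x else if x = i then c else if x \<le> n then g (x - 1) else 0)"
    have Df: "Del n i f = g"
    proof
      fix x show "Del n i f x = g x"
        using g assms(3) unfolding Del_def f_def grid_def by auto
    qed
    have gg: "g j \<in> {1..t}" if "j \<in> {1..n-1}" for j using g that unfolding grid_def by auto
    have fg: "f \<in> grid t n"
      unfolding grid_def
    proof (intro CollectI conjI ballI allI impI)
      fix j assume j: "j \<in> {1..n}"
      consider "j < i" | "j = i" | "j > i" by linarith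
      then show "f j \<in> {1..t}"
      proof cases
        case 1 then show ?thesis using gg[of j] j assms(3) unfolding f_def by auto
      next
        case 2 then show ?thesis using c1 unfolding f_def by auto
      next
        case 3
        then have "j - 1 \<in> {1..n-1}" using j assms(3) by auto
        then show ?thesis using gg[of "j - 1"] 3 j unfolding f_def by auto
      qed
    next
      fix j assume j: "j \<notin> {1..n}"
      then show "f j = 0" using g assms(3) unfolding f_def grid_def by auto
    qed
    have fF: "f \<notin> F" using g Df by auto
    have S: "insert f F \<subseteq> grid t n" using fg Fg by auto
    have ns2: "a i \<le> b i" if "a \<in> insert f F" "b \<in> insert f F"
        "gleq (n - 1) (Del n i a) (Del n i b)" for a b
    proof -
      have fi: "f i = c" unfolding f_def by simp
      show ?thesis using that ns cA cB Df fi by auto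
    qed
    have E1: "inj_on (Del n i) (insert f F)" using Del_props(1)[of i n "insert f F" t] assms(3) S ns2 by blast
    have E2: "\<And>a b. a \<in> insert f F \<Longrightarrow> b \<in> insert f F \<Longrightarrow> gleq n a b \<longleftrightarrow> gleq (n - 1) (Del n i a) (Del n i b)"
      using Del_props(2)[of i n "insert f F" t] assms(3) S ns2 by blast
    note DP2 = E1 E2
    have "has_induced_copy ((\<le>) :: 'a \<Rightarrow> 'a \<Rightarrow> bool) n (insert f F)"
      using sat fg fF by auto
    then have "has_induced_copy ((\<le>) :: 'a \<Rightarrow> 'a \<Rightarrow> bool) (n - 1) (Del n i ` insert f F)"
      using transfer_copy[OF DP2(1), of n "n - 1"] DP2(2) by blast
    then show ?thesis using Df by simp
  qed
  show ?thesis unfolding induced_saturated_def using A B C by blast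
qed

end
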